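(* For all $X,Y\in\mathbb{S}^n_{++}$ and all $s,t\in[0,1]$: (i) $X*_tY=Y*_{1-t}X$; (ii) $X*_s(X*_tY)=X*_{st}Y$; (iii) $(X*_sY)*_tY=X*_{s+t-st}Y$.
   Context: $\mathbb{S}^n_{++}$ denotes the set of real symmetric positive definite $n\times n$ matrices. For $X,Y\in\mathbb{S}^n_{++}$ the matrix $YX^{-1}$ has real positive eigenvalues; let $\alpha=\lambda_{\min}(YX^{-1})$ and $\beta=\lambda_{\max}(YX^{-1})$. For $0<\alpha\le\beta$ and $t\in\mathbb{R}$ set $\varphi_{\alpha\beta}(t)=\frac{\beta^t-\alpha^t}{\beta-\alpha}$ and $\psi_{\alpha\beta}(t)=\frac{\beta\alpha^t-\alpha\beta^t}{\beta-\alpha}$ if $\beta>\alpha$, and $\varphi_{\alpha\beta}(t)=t\alpha^{t-1}$, $\psi_{\alpha\beta}(t)=(1-t)\alpha^t$ if $\beta=\alpha$. The Thompson geodesic from $X$ to $Y$ is $X*_tY=\varphi_{\alpha\beta}(t)\,Y+\psi_{\alpha\beta}(t)\,X$. *)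

theory Defs
  imports "HOL-Analysis.Analysis"
begin

definition spd :: "real^'n^'n \<Rightarrow> bool" where
  "spd A \<longleftrightarrow> transpose A = A \<and> (\<forall>x. x \<noteq> 0 \<longrightarrow> x \<bullet> (A *v x) > 0)"

definition real_eigenvalues :: "real^'n^'n \<Rightarrow> real set" where
  "real_eigenvalues A = {l. \<exists>v. v \<noteq> 0 \<and> A *v v = l *\<^sub>R v}"

definition lam_min :: "real^'n^'n \<Rightarrow> real^'n^'n \<Rightarrow> real" where
  "lam_min X Y = Min (real_eigenvalues (Y ** matrix_inv X))"

definition lam_max :: "real^'n^'n \<Rightarrow> real^'n^'n \<Rightarrow> real" where
  "lam_max X Y = Max (real_eigenvalues (Y ** matrix_inv X))"

definition phi_ab :: "real \<Rightarrow> real \<Rightarrow> real \<Rightarrow> real" where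
  "phi_ab a b t = (if b > a then (b powr t - a powr t) / (b - a) else t * a powr (t - 1))"

definition psi_ab :: "real \<Rightarrow> real \<Rightarrow> real \<Rightarrow> real" where
  "psi_ab a b t = (if b > a then (b * a powr t - a * b powr t) / (b - a) else (1 - t) * a powr t)"

definition thompson_geod :: "real^'n^'n \<Rightarrow> real \<Rightarrow> real^'n^'n \<Rightarrow> real^'n^'n" where
  "thompson_geod X t Y =
     phi_ab (lam_min X Y) (lam_max X Y) t *\<^sub>R Y + psi_ab (lam_min X Y) (lam_max X Y) t *\<^sub>R X"

end

theory Submission
  imports Defs
begin


definition geig :: "real^'n^'n \<Rightarrow> real^'n^'n \<Rightarrow> real set" where
  "geig X Y = {l. \<exists>w. w \<noteq> 0 \<and> Y *v w = l *\<^sub>R (X *v w)}"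

lemma spd_pos: "spd X \<Longrightarrow> w \<noteq> 0 \<Longrightarrow> w \<bullet> (X *v w) > 0"
  unfolding spd_def by auto

lemma spd_sym: "spd X \<Longrightarrow> u \<bullet> (X *v w) = w \<bullet> (X *v u)"
  unfolding spd_def
  by (metis dot_lmul_matrix inner_commute vector_transpose_matrix)

lemma spd_invertible: "spd X \<Longrightarrow> invertible X"
  unfolding invertible_left_inverse matrix_left_invertible_ker
proof (intro allI impI)
  fix x assume "spd X" "X *v x = 0"
  show "x = 0"
  proof (rule ccontr)
    assume "x \<noteq> 0"
    then have "x \<bullet> (X *v x) > 0" using spd_pos[OF \<open>spd X\<close>] by blast
    then show False using \<open>X *v x = 0\<close> by simp
  qed
qed

lemma matrix_inv_props: "invertible A \<Longrightarrow> A ** matrix_inv A = mat 1 \<and> matrix_inv A ** A = mat 1"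
  unfolding matrix_inv_def invertible_def by (rule someI_ex)

lemma eig_geig:
  assumes "spd X"
  shows "real_eigenvalues (Y ** matrix_inv X) = geig X Y"
proof -
  have i: "X ** matrix_inv X = mat 1" "matrix_inv X ** X = mat 1"
    using matrix_inv_props[OF spd_invertible[OF assms]] by auto
  show ?thesis
  proof (rule set_eqI, rule iffI)
    fix l assume "l \<in> real_eigenvalues (Y ** matrix_inv X)"
    then obtain v where v: "v \<noteq> 0" "(Y ** matrix_inv X) *v v = l *\<^sub>R v"
      unfolding real_eigenvalues_def by auto
    define w where "w = matrix_inv X *v v"
    have Xw: "X *v w = v" unfolding w_def by (simp add: matrix_vector_mul_assoc i)
    have "w \<noteq> 0" using Xw v by auto
    moreover have "Y *v w = l *\<^sub>R (X *v w)"
      using v(2) Xw by (simp add: w_def matrix_vector_mul_assoc)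
    ultimately show "l \<in> geig X Y" unfolding geig_def by auto
  next
    fix l assume "l \<in> geig X Y"
    then obtain w where w: "w \<noteq> 0" "Y *v w = l *\<^sub>R (X *v w)"
      unfolding geig_def by auto
    define v where "v = X *v w"
    have "v \<noteq> 0" using w spd_pos[OF assms] unfolding v_def by fastforce
    moreover have "matrix_inv X *v v = w" unfolding v_def
      by (simp add: matrix_vector_mul_assoc i)
    then have "(Y ** matrix_inv X) *v v = l *\<^sub>R v"
      using w by (simp add: matrix_vector_mul_assoc[symmetric] v_def)
    ultimately show "l \<in> real_eigenvalues (Y ** matrix_inv X)"
      unfolding real_eigenvalues_def by auto
  qed
qed

lemma geig_pos:
  assumes "spd X" "spd Y" "l \<in> geig X Y" shows "l > 0"
proof -
  obtain w where w: "w \<noteq> 0" "Y *v w = l *\<^sub>R (X *v w)"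
    using assms(3) unfolding geig_def by auto
  have e: "w \<bullet> (Y *v w) = l * (w \<bullet> (X *v w))" using w by simp
  have a: "w \<bullet> (Y *v w) > 0" by (rule spd_pos[OF assms(2) w(1)])
  have b: "w \<bullet> (X *v w) > 0" by (rule spd_pos[OF assms(1) w(1)])
  show ?thesis using e a b by (metis zero_less_mult_pos2)
qed




lemma aux: "(zz::real) + q = l * p \<Longrightarrow> l * (r * (2 * p)) = r * (zz * 2) + r * (2 * q)"
  by (metis distrib_left mult.commute mult.left_commute mult_2)

lemma geig_orth:
  assumes "spd X" "spd Y" "Y *v w1 = l1 *\<^sub>R (X *v w1)" "Y *v w2 = l2 *\<^sub>R (X *v w2)" "l1 \<noteq> l2"
  shows "w1 \<bullet> (X *v w2) = 0"
proof -
  have "w1 \<bullet> (Y *v w2) = l2 * (w1 \<bullet> (X *v w2))" using assms(4) by simp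
  moreover have "w1 \<bullet> (Y *v w2) = w2 \<bullet> (Y *v w1)" using spd_sym[OF assms(2)] by blast
  moreover have "w2 \<bullet> (Y *v w1) = l1 * (w2 \<bullet> (X *v w1))" using assms(3) by simp
  moreover have "w2 \<bullet> (X *v w1) = w1 \<bullet> (X *v w2)" using spd_sym[OF assms(1)] by blast
  ultimately have "l2 * (w1 \<bullet> (X *v w2)) = l1 * (w1 \<bullet> (X *v w2))" by metis
  then show ?thesis using assms(5) by (metis mult_cancel_right)
qed

lemma geig_finite:
  assumes "spd X" "spd Y"
  shows "finite (geig X Y)"
proof -
  define W where "W l = (SOME w. w \<noteq> 0 \<and> Y *v w = l *\<^sub>R (X *v w))" for l
  have W: "W l \<noteq> 0 \<and> Y *v W l = l *\<^sub>R (X *v W l)" if "l \<in> geig X Y" for l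
    using that unfolding geig_def W_def mem_Collect_eq by (rule someI_ex)
  have orth: "W l1 \<bullet> (X *v W l2) = 0" if "l1 \<in> geig X Y" "l2 \<in> geig X Y" "l1 \<noteq> l2" for l1 l2
    using geig_orth[OF assms] W that by blast
  have pos: "W l \<bullet> (X *v W l) > 0" if "l \<in> geig X Y" for l
    using W[OF that] spd_pos[OF assms(1)] by blast
  have inj: "inj_on W (geig X Y)"
  proof (rule inj_onI)
    fix a b assume ab: "a \<in> geig X Y" "b \<in> geig X Y" "W a = W b"
    show "a = b"
    proof (rule ccontr)
      assume "a \<noteq> b"
      then have "W a \<bullet> (X *v W b) = 0" using orth ab by blast
      then show False using pos[OF ab(2)] ab(3) by simp
    qed
  qed
  have "independent (W ` geig X Y)"
  proof
    assume "dependent (W ` geig X Y)"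
    then obtain T u where T: "finite T" "T \<subseteq> W ` geig X Y" "(\<Sum>v\<in>T. u v *\<^sub>R v) = 0" "\<exists>v\<in>T. u v \<noteq> 0"
      unfolding real_vector.dependent_explicit by blast
    then obtain v0 where v0: "v0 \<in> T" "u v0 \<noteq> 0" by blast
    obtain l0 where l0: "l0 \<in> geig X Y" "v0 = W l0" using v0 T(2) by blast
    have o: "v \<bullet> (X *v v0) = 0" if vT: "v \<in> T" and vne: "v \<noteq> v0" for v
    proof -
      obtain l where "l \<in> geig X Y" "v = W l" using vT T(2) by blast
      then show ?thesis using orth l0 vne by blast
    qed
    have "0 = (\<Sum>v\<in>T. u v *\<^sub>R v) \<bullet> (X *v v0)" using T(3) by simp
    also have "\<dots> = (\<Sum>v\<in>T. u v * (v \<bullet> (X *v v0)))" by (simp add: inner_sum_left)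
    also have "\<dots> = u v0 * (v0 \<bullet> (X *v v0))"
      by (subst sum.remove[OF T(1) v0(1)]) (auto simp: o intro!: sum.neutral)
    finally show False using v0(2) pos[OF l0(1)] l0(2) by simp
  qed
  then have "finite (W ` geig X Y)" using independent_bound by blast
  then show ?thesis using inj finite_imageD by blast
qed

lemma geig_nonempty:
  fixes X Y :: "real^'n^'n"
  assumes "spd X" "spd Y"
  shows "geig X Y \<noteq> {}"
proof -
  define f where "f w = (w \<bullet> (Y *v w)) / (w \<bullet> (X *v w))" for w :: "real^'n"
  have S: "compact (sphere (0::real^'n) 1)" "sphere (0::real^'n) 1 \<noteq> {}" by auto
  have Xnz: "w \<bullet> (X *v w) \<noteq> 0" if "w \<in> sphere 0 1" for w
  proof -
    have "w \<noteq> 0" using that by auto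
    then show ?thesis using spd_pos[OF assms(1), of w] by simp
  qed
  have Xnz': "w \<bullet> (X *v w) \<noteq> 0" if "norm w = 1" for w
    using Xnz that by simp
  have c: "continuous_on (sphere 0 1) f" unfolding f_def
    by (intro continuous_intros Xnz) (auto intro: linear_continuous_on matrix_vector_mul_bounded_linear dest: Xnz')
  obtain w0 where w0: "w0 \<in> sphere 0 1" "\<And>y. y \<in> sphere 0 1 \<Longrightarrow> f y \<le> f w0"
    using continuous_attains_sup[OF S c] by blast
  define l where "l = f w0"
  have le: "u \<bullet> (Y *v u) \<le> l * (u \<bullet> (X *v u))" for u
  proof (cases "u = 0")
    case True then show ?thesis by simp
  next
    case False
    define u' where "u' = (1 / norm u) *\<^sub>R u"
    have "u' \<in> sphere 0 1" using False by (simp add: u'_def)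
    then have "f u' \<le> l" using w0 l_def by blast
    moreover have "f u' = f u"
    proof -
      have n: "norm u \<noteq> 0" using False by simp
      have "u \<bullet> (X *v u) \<noteq> 0" using spd_pos[OF assms(1) False] by simp
      then show ?thesis using n unfolding f_def u'_def
        by (simp add: matrix_vector_mult_scaleR power2_eq_square)
    qed
    moreover have "u \<bullet> (X *v u) > 0" using spd_pos[OF assms(1) False] .
    ultimately show ?thesis unfolding f_def by (simp add: divide_le_eq)
  qed
  define Q where "Q u = l * (u \<bullet> (X *v u)) - u \<bullet> (Y *v u)" for u
  have Qnn: "Q u \<ge> 0" for u using le[of u] by (simp add: Q_def)
  have Q0: "Q w0 = 0"
    using Xnz[OF w0(1)] by (simp add: Q_def l_def f_def)
  define z where "z = l *\<^sub>R (X *v w0) - Y *v w0"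
  have expand: "Q (w0 + r *\<^sub>R z) = Q w0 + 2 * r * (z \<bullet> z) + r^2 * Q z" for r
  proof -
    have sX: "z \<bullet> (X *v w0) = w0 \<bullet> (X *v z)" using spd_sym[OF assms(1)] by blast
    have sY: "z \<bullet> (Y *v w0) = w0 \<bullet> (Y *v z)" using spd_sym[OF assms(2)] by blast
    have zz: "z \<bullet> z = l * (z \<bullet> (X *v w0)) - z \<bullet> (Y *v w0)" unfolding z_def
      by (simp add: inner_diff_right)
    show ?thesis unfolding Q_def
      using sX sY zz
      apply (simp add: matrix_vector_right_distrib matrix_vector_mult_scaleR inner_add_left inner_add_right
          algebra_simps power2_eq_square)
      by (rule aux)
  qed
  have "z = 0"
  proof (rule ccontr)
    assume "z \<noteq> 0"
    then have c: "z \<bullet> z > 0" by simp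
    define q where "q = Q z"
    define r where "r = - (z \<bullet> z) / (q + 1)"
    have q: "q \<ge> 0" using Qnn q_def by simp
    have "0 \<le> Q (w0 + r *\<^sub>R z)" by (rule Qnn)
    also have "\<dots> = 2 * r * (z \<bullet> z) + r^2 * q" using expand Q0 q_def by simp
    also have "\<dots> < 0"
    proof -
      have "2 * r * (z \<bullet> z) + r^2 * q = r * (2 * (z \<bullet> z) + r * q)" by (simp add: algebra_simps power2_eq_square)
      moreover have "r < 0" using c q by (simp add: r_def)
      moreover have "2 * (z \<bullet> z) + r * q > 0"
      proof -
        have "r * q = - (z \<bullet> z) * (q / (q + 1))" by (simp add: r_def)
        moreover have "q / (q+1) \<le> 1" using q by simp
        ultimately have "r * q \<ge> - (z \<bullet> z)" using c
          by (metis mult_le_cancel_left_pos mult.right_neutral neg_le_iff_le mult_minus_left)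
        then show ?thesis using c by linarith
      qed
      ultimately show ?thesis by (simp add: mult_neg_pos)
    qed
    finally show False by simp
  qed
  then have "Y *v w0 = l *\<^sub>R (X *v w0)" unfolding z_def by simp
  moreover have "w0 \<noteq> 0" using w0(1) by auto
  ultimately show ?thesis unfolding geig_def by blast
qed




lemma inv_powr1: "0 < a \<Longrightarrow> (1/a) powr (1 - t) = a powr t / (a::real)"
  by (simp add: powr_divide powr_diff)

lemma inv_powr2: "0 < a \<Longrightarrow> (1/a) powr (- t) = a powr (t::real)"
  by (simp add: powr_divide powr_minus_divide)

lemma pow_m1: "0 < a \<Longrightarrow> a powr (t - 1) = a powr t / (a::real)"
  by (simp add: powr_diff)

lemma alg1: "(b::real) \<noteq> a \<Longrightarrow> (B - A)/(b-a)*a + (b*A - a*B)/(b-a) = A \<and> (B - A)/(b-a)*b + (b*A - a*B)/(b-a) = B"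
proof -
  assume h: "b \<noteq> a"
  then have d: "b - a \<noteq> 0" by simp
  have 1: "(B - A)/(b-a)*a + (b*A - a*B)/(b-a) = ((B-A)*a + (b*A - a*B))/(b-a)" by (simp add: add_divide_distrib)
  have 2: "(B - A)/(b-a)*b + (b*A - a*B)/(b-a) = ((B-A)*b + (b*A - a*B))/(b-a)" by (simp add: add_divide_distrib)
  have 3: "(B-A)*a + (b*A - a*B) = A * (b - a)" "(B-A)*b + (b*A - a*B) = B*(b-a)" by algebra+
  show ?thesis using d by (simp only: 1 2 3) simp
qed

lemma alg2: "(0::real) < a \<Longrightarrow> 0 < b \<Longrightarrow> a \<noteq> b \<Longrightarrow>
   (A/a - B/b)/(1/a - 1/b) = (b*A - a*B)/(b-a) \<and> ((1/a)*(B/b) - (1/b)*(A/a))/(1/a - 1/b) = (B - A)/(b-a)"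
proof -
  assume h: "0 < a" "0 < b" "a \<noteq> b"
  have e: "1/a - 1/b = (b-a)/(a*b)" using h by (simp add: field_simps)
  have f: "A/a - B/b = (b*A - a*B)/(a*b)" using h by (simp add: field_simps)
  have g: "(1/a)*(B/b) - (1/b)*(A/a) = (B-A)/(a*b)" using h by (simp add: field_simps)
  have ab: "a*b \<noteq> 0" using h by simp
  show ?thesis using h by (simp only: e f g) (simp add: ab)
qed

lemma alg3: "(b::real) \<noteq> a \<Longrightarrow> B \<noteq> A \<Longrightarrow>
  (Q-P)/(B-A) * ((B-A)/(b-a)) = (Q-P)/(b-a) \<and>
  (Q-P)/(B-A) * ((b*A - a*B)/(b-a)) + (B*P - A*Q)/(B-A) = (b*P - a*Q)/(b-a)"
proof -
  assume h: "b \<noteq> a" "B \<noteq> A"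
  then have d1: "b - a \<noteq> 0" and d2: "B - A \<noteq> 0" by auto
  have 1: "(Q-P)/(B-A) * ((B-A)/(b-a)) = (Q-P)/(b-a)" using d2 by simp
  have "(Q-P)/(B-A) * ((b*A - a*B)/(b-a)) + (B*P - A*Q)/(B-A)
      = ((Q-P)*(b*A - a*B) + (B*P - A*Q)*(b-a)) / ((B-A)*(b-a))"
  proof -
    have x1: "(Q-P)/(B-A) * ((b*A - a*B)/(b-a)) = (Q-P)*(b*A - a*B) / ((B-A)*(b-a))"
      by (rule times_divide_times_eq)
    have x2: "(B*P - A*Q)/(B-A) = (B*P - A*Q)*(b-a) / ((B-A)*(b-a))" using d1 by simp
    show ?thesis unfolding x1 x2 by (rule add_divide_distrib[symmetric])
  qed
  also have "(Q-P)*(b*A - a*B) + (B*P - A*Q)*(b-a) = (b*P - a*Q) * (B - A)" by algebra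
  also have "(b*P - a*Q) * (B - A) / ((B-A)*(b-a)) = (b*P - a*Q)/(b-a)" using d2 by simp
  finally show ?thesis using 1 by simp
qed

lemma S1:
  assumes "0 < a" "a \<le> b"
  shows "phi_ab a b t * a + psi_ab a b t = a powr t \<and> phi_ab a b t * b + psi_ab a b t = b powr t"
proof (cases "a < b")
  case True
  then show ?thesis using alg1[of b a "b powr t" "a powr t"] by (simp add: phi_ab_def psi_ab_def)
next
  case False
  then have "b = a" using assms by simp
  then show ?thesis using assms by (simp add: phi_ab_def psi_ab_def pow_m1 field_simps)
qed

lemma S2:
  assumes "0 < a" "a \<le> b"
  shows "phi_ab (1/b) (1/a) (1 - t) = psi_ab a b t \<and> psi_ab (1/b) (1/a) (1 - t) = phi_ab a b t"
proof (cases "a < b")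
  case True
  have b: "0 < b" using assms by simp
  have "1/b < 1/a" using True assms by (simp add: frac_less2)
  then show ?thesis using True assms b alg2[of a b "a powr t" "b powr t"]
    by (simp add: phi_ab_def psi_ab_def inv_powr1)
next
  case False
  then have "b = a" using assms by simp
  then show ?thesis using assms
    by (simp add: phi_ab_def psi_ab_def inv_powr1 inv_powr2 pow_m1 field_simps)
qed

lemma S3:
  assumes "0 < a" "a \<le> b" "0 \<le> t"
  shows "phi_ab (a powr t) (b powr t) s * phi_ab a b t = phi_ab a b (s * t)
       \<and> phi_ab (a powr t) (b powr t) s * psi_ab a b t + psi_ab (a powr t) (b powr t) s = psi_ab a b (s * t)"
proof (cases "a < b \<and> 0 < t")
  case True
  have b: "0 < b" using assms by simp
  have lt: "a powr t < b powr t" using True assms by (simp add: powr_less_mono2)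
  have pp: "(a powr t) powr s = a powr (s * t)" "(b powr t) powr s = b powr (s * t)"
    by (simp_all add: powr_powr mult.commute)
  show ?thesis using True lt alg3[of b a "b powr t" "a powr t" "b powr (s*t)" "a powr (s*t)"]
    by (simp add: phi_ab_def psi_ab_def pp)
next
  case False
  then consider "b = a" | "t = 0" "a < b" using assms by linarith
  then show ?thesis
  proof cases
    case 1
    have e1: "(a powr t) powr (s - 1) = a powr (s*t) / a powr t" using assms
      by (simp add: powr_powr powr_diff mult.commute)
    have e2: "a powr (s * t - 1) = a powr (s*t) / a" using assms by (simp add: powr_diff)
    have e3: "a powr t * a powr (s * t - t) = a powr (s * t)" by (simp add: powr_add[symmetric])
    show ?thesis using 1 assms
      by (simp add: phi_ab_def psi_ab_def e1 e2 e3 pow_m1 powr_powr mult.commute field_simps)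
  next
    case 2
    then show ?thesis using assms by (simp add: phi_ab_def psi_ab_def field_simps)
  qed
qed

lemma phi_nonneg: "0 < a \<Longrightarrow> a \<le> b \<Longrightarrow> 0 \<le> t \<Longrightarrow> 0 \<le> phi_ab a b t"
  by (auto simp: phi_ab_def intro!: divide_nonneg_nonneg powr_mono2)




lemma comb_mv: "(a *\<^sub>R Y + b *\<^sub>R X) *v w = a *\<^sub>R (Y *v w) + b *\<^sub>R (X *v (w::real^'n))"
  for X Y :: "real^'n^'n"
  by (simp add: matrix_vector_mult_add_rdistrib scaleR_matrix_vector_assoc)

lemma geig_affine:
  fixes X Y :: "real^'n^'n"
  assumes "spd X" "geig X Y \<noteq> {}"
  shows "geig X (a *\<^sub>R Y + b *\<^sub>R X) = (\<lambda>l. a*l+b) ` geig X Y"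
proof (rule set_eqI, rule iffI)
  fix m assume "m \<in> geig X (a *\<^sub>R Y + b *\<^sub>R X)"
  then obtain w where w: "w \<noteq> 0" "a *\<^sub>R (Y *v w) + b *\<^sub>R (X *v w) = m *\<^sub>R (X *v w)"
    unfolding geig_def by (auto simp: comb_mv)
  have Xw: "X *v w \<noteq> 0" using spd_pos[OF assms(1) w(1)] by auto
  have e: "a *\<^sub>R (Y *v w) = (m - b) *\<^sub>R (X *v w)" using w(2)
    by (simp add: algebra_simps)
  show "m \<in> (\<lambda>l. a*l+b) ` geig X Y"
  proof (cases "a = 0")
    case True
    then have "(m - b) *\<^sub>R (X *v w) = 0" using e by simp
    then have "m = b" using Xw by simp
    moreover obtain l where "l \<in> geig X Y" using assms(2) by blast
    ultimately show ?thesis using True by force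
  next
    case False
    have "Y *v w = ((m - b)/a) *\<^sub>R (X *v w)" using e False
      by (metis (no_types, lifting) divide_inverse_commute eq_vector_fraction_iff inverse_eq_divide mult.commute scaleR_scaleR)
    then have "(m-b)/a \<in> geig X Y" using w(1) unfolding geig_def by blast
    moreover have "m = a * ((m-b)/a) + b" using False by simp
    ultimately show ?thesis by blast
  qed
next
  fix m assume "m \<in> (\<lambda>l. a*l+b) ` geig X Y"
  then obtain l w where lw: "m = a*l+b" "w \<noteq> 0" "Y *v w = l *\<^sub>R (X *v w)"
    unfolding geig_def by blast
  then have "(a *\<^sub>R Y + b *\<^sub>R X) *v w = m *\<^sub>R (X *v w)"
    by (simp add: comb_mv scaleR_add_left)
  then show "m \<in> geig X (a *\<^sub>R Y + b *\<^sub>R X)" using lw(2) unfolding geig_def by blast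
qed

lemma lam_geig: "spd X \<Longrightarrow> lam_min X Y = Min (geig X Y) \<and> lam_max X Y = Max (geig X Y)"
  by (simp add: lam_min_def lam_max_def eig_geig)

lemma lam_basic:
  assumes "spd X" "spd Y"
  shows "0 < lam_min X Y" "lam_min X Y \<le> lam_max X Y"
    "lam_min X Y \<in> geig X Y" "lam_max X Y \<in> geig X Y"
    "\<And>l. l \<in> geig X Y \<Longrightarrow> lam_min X Y \<le> l \<and> l \<le> lam_max X Y"
proof -
  have f: "finite (geig X Y)" and ne: "geig X Y \<noteq> {}"
    using geig_finite[OF assms] geig_nonempty[OF assms] by auto
  show m: "lam_min X Y \<in> geig X Y" "lam_max X Y \<in> geig X Y"
    using lam_geig[OF assms(1), of Y] f ne by auto
  show "\<And>l. l \<in> geig X Y \<Longrightarrow> lam_min X Y \<le> l \<and> l \<le> lam_max X Y"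
    using lam_geig[OF assms(1), of Y] f by auto
  then show "lam_min X Y \<le> lam_max X Y" using m by blast
  show "0 < lam_min X Y" using geig_pos[OF assms m(1)] .
qed

lemma lam_comb:
  fixes X Y :: "real^'n^'n"
  assumes "spd X" "spd Y" "0 \<le> a"
  shows "lam_min X (a *\<^sub>R Y + b *\<^sub>R X) = a * lam_min X Y + b
       \<and> lam_max X (a *\<^sub>R Y + b *\<^sub>R X) = a * lam_max X Y + b"
proof -
  have f: "finite (geig X Y)" and ne: "geig X Y \<noteq> {}"
    using geig_finite[OF assms(1,2)] geig_nonempty[OF assms(1,2)] by auto
  have mono: "mono (\<lambda>l. a*l+b)" using assms(3) by (auto intro!: monoI mult_left_mono)
  have l1: "lam_min X (a *\<^sub>R Y + b *\<^sub>R X) = Min ((\<lambda>l. a*l+b) ` geig X Y)"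
    using lam_geig[OF assms(1)] geig_affine[OF assms(1) ne] by simp
  have l2: "lam_max X (a *\<^sub>R Y + b *\<^sub>R X) = Max ((\<lambda>l. a*l+b) ` geig X Y)"
    using lam_geig[OF assms(1)] geig_affine[OF assms(1) ne] by simp
  show ?thesis
    unfolding l1 l2
    using mono_Min_commute[OF mono f ne] mono_Max_commute[OF mono f ne] lam_geig[OF assms(1), of Y] by simp
qed

lemma geig_swap:
  assumes "spd X" "spd Y"
  shows "geig Y X = (\<lambda>l. 1/l) ` geig X Y"
proof (rule set_eqI, rule iffI)
  fix m assume m: "m \<in> geig Y X"
  have mp: "m > 0" using geig_pos[OF assms(2,1) m] .
  obtain w where w: "w \<noteq> 0" "X *v w = m *\<^sub>R (Y *v w)" using m unfolding geig_def by blast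
  then have "Y *v w = (1/m) *\<^sub>R (X *v w)" using mp by simp
  then have "1/m \<in> geig X Y" using w(1) unfolding geig_def by blast
  then show "m \<in> (\<lambda>l. 1/l) ` geig X Y" using mp by force
next
  fix m assume "m \<in> (\<lambda>l. 1/l) ` geig X Y"
  then obtain l where l: "m = 1/l" "l \<in> geig X Y" by blast
  have lp: "l > 0" using geig_pos[OF assms l(2)] .
  obtain w where w: "w \<noteq> 0" "Y *v w = l *\<^sub>R (X *v w)" using l(2) unfolding geig_def by blast
  then have "X *v w = m *\<^sub>R (Y *v w)" using lp l(1) by simp
  then show "m \<in> geig Y X" using w(1) unfolding geig_def by blast
qed

lemma lam_swap:
  assumes "spd X" "spd Y"
  shows "lam_min Y X = 1 / lam_max X Y \<and> lam_max Y X = 1 / lam_min X Y"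
proof -
  have f: "finite (geig X Y)" using geig_finite[OF assms] .
  have f2: "finite (geig Y X)" using geig_finite[OF assms(2,1)] .
  note b = lam_basic[OF assms]
  have "Min (geig Y X) = 1 / lam_max X Y"
  proof (rule Min_eqI[OF f2])
    show "1 / lam_max X Y \<in> geig Y X" using b geig_swap[OF assms] by blast
    fix y assume "y \<in> geig Y X"
    then obtain l where "y = 1/l" "l \<in> geig X Y" using geig_swap[OF assms] by blast
    then show "1 / lam_max X Y \<le> y" using b geig_pos[OF assms]
      by (auto intro!: divide_left_mono mult_pos_pos)
  qed
  moreover have "Max (geig Y X) = 1 / lam_min X Y"
  proof (rule Max_eqI[OF f2])
    show "1 / lam_min X Y \<in> geig Y X" using b geig_swap[OF assms] by blast
    fix y assume "y \<in> geig Y X"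
    then obtain l where "y = 1/l" "l \<in> geig X Y" using geig_swap[OF assms] by blast
    then show "y \<le> 1 / lam_min X Y" using b geig_pos[OF assms]
      by (auto intro!: divide_left_mono mult_pos_pos)
  qed
  ultimately show ?thesis using lam_geig[OF assms(2)] by simp
qed




lemma transpose_add': "transpose (A + B) = transpose A + transpose (B::real^'n^'m)"
  by (simp add: transpose_def vec_eq_iff)

lemma spd_comb:
  fixes X Y :: "real^'n^'n"
  assumes "spd X" "spd Y" "0 \<le> a" "0 \<le> b" "0 < a + b"
  shows "spd (a *\<^sub>R Y + b *\<^sub>R X)"
  unfolding spd_def
proof (intro conjI allI impI)
  show "transpose (a *\<^sub>R Y + b *\<^sub>R X) = a *\<^sub>R Y + b *\<^sub>R X"
    using assms(1,2) unfolding spd_def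
    by (simp add: transpose_add' transpose_scalar)
  fix x :: "real^'n" assume x: "x \<noteq> 0"
  have p: "x \<bullet> (Y *v x) > 0" "x \<bullet> (X *v x) > 0" using spd_pos assms x by blast+
  have "x \<bullet> ((a *\<^sub>R Y + b *\<^sub>R X) *v x) = a * (x \<bullet> (Y *v x)) + b * (x \<bullet> (X *v x))"
    by (simp add: comb_mv inner_add_right)
  also have "\<dots> > 0"
  proof (cases "a > 0")
    case True then show ?thesis using p assms by (simp add: add_pos_nonneg)
  next
    case False then have "b > 0" using assms by simp
    then show ?thesis using p assms by (simp add: add_nonneg_pos)
  qed
  finally show "x \<bullet> ((a *\<^sub>R Y + b *\<^sub>R X) *v x) > 0" .
qed

lemma psi_nonneg:
  assumes "0 < a" "a \<le> b" "t \<le> 1"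
  shows "0 \<le> psi_ab a b t"
proof (cases "a < b")
  case True
  have b: "0 < b" using assms by simp
  have m: "b powr (t - 1) \<le> a powr (t - 1)" using assms by (intro powr_mono2') auto
  have "b * a powr t - a * b powr t = a * b * (a powr (t-1) - b powr (t-1))"
    using assms b by (simp add: pow_m1 field_simps)
  also have "\<dots> \<ge> 0" using m assms b by simp
  finally show ?thesis using True by (simp add: psi_ab_def)
next
  case False then show ?thesis using assms by (simp add: psi_ab_def)
qed

lemma geod_spd:
  fixes X Y :: "real^'n^'n"
  assumes "spd X" "spd Y" "s \<in> {0..1}"
  shows "spd (thompson_geod X s Y)"
proof -
  note b = lam_basic[OF assms(1,2)]
  let ?a = "lam_min X Y" and ?b = "lam_max X Y"
  have p1: "0 \<le> phi_ab ?a ?b s" using phi_nonneg b assms by auto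
  have p2: "0 \<le> psi_ab ?a ?b s" using psi_nonneg b assms by auto
  have "phi_ab ?a ?b s * ?a + psi_ab ?a ?b s = ?a powr s" using S1 b by blast
  moreover have "?a powr s > 0" using b by simp
  ultimately have "0 < phi_ab ?a ?b s + psi_ab ?a ?b s"
  proof -
    assume e: "phi_ab ?a ?b s * ?a + psi_ab ?a ?b s = ?a powr s" and q: "?a powr s > 0"
    show ?thesis
    proof (rule ccontr)
      assume "\<not> 0 < phi_ab ?a ?b s + psi_ab ?a ?b s"
      then have "phi_ab ?a ?b s = 0" "psi_ab ?a ?b s = 0" using p1 p2 by linarith+
      then show False using e q by simp
    qed
  qed
  then show ?thesis unfolding thompson_geod_def using spd_comb[OF assms(1,2) p1 p2] by blast
qed

lemma geod_swap:
  fixes X Y :: "real^'n^'n"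
  assumes "spd X" "spd Y"
  shows "thompson_geod X t Y = thompson_geod Y (1 - t) X"
proof -
  note b = lam_basic[OF assms(1,2)]
  note sw = lam_swap[OF assms]
  note s2 = S2[OF b(1,2), of t]
  show ?thesis unfolding thompson_geod_def using sw s2 by (simp add: add.commute)
qed

lemma geod_comp:
  fixes X Y :: "real^'n^'n"
  assumes "spd X" "spd Y" "0 \<le> t"
  shows "thompson_geod X s (thompson_geod X t Y) = thompson_geod X (s * t) Y"
proof -
  note b = lam_basic[OF assms(1,2)]
  let ?a = "lam_min X Y" and ?b = "lam_max X Y"
  have p1: "0 \<le> phi_ab ?a ?b t" using phi_nonneg b assms by auto
  have lc: "lam_min X (thompson_geod X t Y) = ?a powr t \<and> lam_max X (thompson_geod X t Y) = ?b powr t"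
    unfolding thompson_geod_def using lam_comb[OF assms(1,2) p1] S1[OF b(1,2)] by (simp add: mult.commute)
  note s3 = S3[OF b(1,2) assms(3), of s]
  have lc1: "lam_min X (thompson_geod X t Y) = ?a powr t" and lc2: "lam_max X (thompson_geod X t Y) = ?b powr t"
    using lc by auto
  have "thompson_geod X s (thompson_geod X t Y) = phi_ab (?a powr t) (?b powr t) s *\<^sub>R (thompson_geod X t Y)
     + psi_ab (?a powr t) (?b powr t) s *\<^sub>R X"
    unfolding thompson_geod_def[of X s] lc1 lc2 ..
  also have "\<dots> = (phi_ab (?a powr t) (?b powr t) s * phi_ab ?a ?b t) *\<^sub>R Y
     + (phi_ab (?a powr t) (?b powr t) s * psi_ab ?a ?b t + psi_ab (?a powr t) (?b powr t) s) *\<^sub>R X"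
    unfolding thompson_geod_def[of X t Y] by (simp add: scaleR_add_right scaleR_add_left)
  also have "\<dots> = thompson_geod X (s * t) Y"
    unfolding thompson_geod_def[of X "s*t" Y] using s3 by simp
  finally show ?thesis .
qed

theorem lemma4p1:
  fixes X Y :: "real^'n^'n" and s t :: real
  assumes "spd X" and "spd Y"
    and "s \<in> {0..1}" and "t \<in> {0..1}"
  shows "thompson_geod X t Y = thompson_geod Y (1 - t) X
       \<and> thompson_geod X s (thompson_geod X t Y) = thompson_geod X (s * t) Y
       \<and> thompson_geod (thompson_geod X s Y) t Y = thompson_geod X (s + t - s * t) Y"
proof (intro conjI)
  show "thompson_geod X t Y = thompson_geod Y (1 - t) X" by (rule geod_swap[OF assms(1,2)])
  show "thompson_geod X s (thompson_geod X t Y) = thompson_geod X (s * t) Y"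
    using geod_comp[OF assms(1,2)] assms(4) by simp
  have Z: "spd (thompson_geod X s Y)" using geod_spd[OF assms(1,2,3)] .
  have "thompson_geod (thompson_geod X s Y) t Y = thompson_geod Y (1 - t) (thompson_geod X s Y)"
    by (rule geod_swap[OF Z assms(2)])
  also have "\<dots> = thompson_geod Y (1 - t) (thompson_geod Y (1 - s) X)"
    using geod_swap[OF assms(1,2)] by simp
  also have "\<dots> = thompson_geod Y ((1 - t) * (1 - s)) X"
    using geod_comp[OF assms(2,1), of "1 - s" "1 - t"] assms(3) by simp
  also have "\<dots> = thompson_geod X (1 - (1 - t) * (1 - s)) Y"
    using geod_swap[OF assms(1,2), of "1 - (1 - t) * (1 - s)"] by simp
  also have "1 - (1 - t) * (1 - s) = s + t - s * t" by (simp add: algebra_simps)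
  finally show "thompson_geod (thompson_geod X s Y) t Y = thompson_geod X (s + t - s * t) Y" .
qed


end
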